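(* Let $\mathcal{K}\subseteq\wp(\mathcal{G})$ be coherent and let $A_1,\ldots,A_n\in\mathcal{K}$ ($n\geq 1$). Suppose $B\subseteq\mathcal{G}$ is such that for each sequence $\langle g_1,\ldots,g_n\rangle\in A_1\times\cdots\times A_n$, either $0\in\mathcal{E}(\{g_1,\ldots,g_n\})$, or there is some $f\in B$ with $f\in\mathcal{E}(\{g_1,\ldots,g_n\})$. Then $B\in\mathcal{K}$.
   Context: $\Omega$ is a non-empty set and $\mathcal{G}$ is the set of bounded functions $\Omega\to\mathbb{R}$. $f\geq g$ means pointwise $\geq$; $f\gneq g$ means $f\geq g$ and $f\neq g$; $\mathcal{G}_{\gneq 0}=\{f: f\gneq 0\}$. $\mathrm{posi}(B)=\{\sum_{i=1}^m\lambda_i h_i: m\geq1,\lambda_i>0,h_i\in B\}$, and $\mathcal{E}(E):=\mathrm{posi}(E\cup\mathcal{G}_{\gneq 0})$. A set $\mathcal{K}\subseteq\wp(\mathcal{G})$ is coherent if: (K$_\emptyset$) $\emptyset\notin\mathcal{K}$; (K$_0$) if $A\in\mathcal{K}$ then $A\setminus\{0\}\in\mathcal{K}$; (K$_{\gneq0}$) if $g\in\mathcal{G}_{\gneq0}$ then $\{g\}\in\mathcal{K}$; (K$_\supseteq$) if $A\in\mathcal{K}$ and $B\supseteq A$ then $B\in\mathcal{K}$; (K$_{\mathrm{Dom}}$) if $A\in\mathcal{K}$ and for each $g\in A$, $f_g$ is a gamble with $f_g\geq g$, then $\{f_g: g\in A\}\in\mathcal{K}$; (K$_{\mathrm{Add}}$)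 if $A_1,\ldots,A_n\in\mathcal{K}$ (finitely many) and for each $\langle g_1,\ldots,g_n\rangle\in A_1\times\cdots\times A_n$, $f_{\langle g_1,\ldots,g_n\rangle}$ is some member of $\mathrm{posi}(\{g_1,\ldots,g_n\})$, then $\{f_{\langle g_1,\ldots,g_n\rangle}:\langle g_1,\ldots,g_n\rangle\in A_1\times\cdots\times A_n\}\in\mathcal{K}$. *)

theory Defs
  imports "HOL-Analysis.Analysis"
begin

text \<open>Omega is the (nonempty) type 'a. Gambles are bounded real-valued functions on 'a.\<close>

definition gambles :: "('a \<Rightarrow> real) set" where
  "gambles = {f. bounded (range f)}"

definition gneq :: "('a \<Rightarrow> real) \<Rightarrow> ('a \<Rightarrow> real) \<Rightarrow> bool" where
  "gneq f g \<longleftrightarrow> (\<forall>x. f x \<ge> g x) \<and> f \<noteq> g"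

definition gpos :: "('a \<Rightarrow> real) set" where
  "gpos = {f \<in> gambles. gneq f (\<lambda>x. 0)}"

definition posi :: "('a \<Rightarrow> real) set \<Rightarrow> ('a \<Rightarrow> real) set" where
  "posi B = {f. \<exists>m::nat. m \<ge> 1 \<and> (\<exists>c h. (\<forall>i<m. c i > (0::real) \<and> h i \<in> B)
                 \<and> f = (\<lambda>x. \<Sum>i<m. c i * h i x))}"

definition natext :: "('a \<Rightarrow> real) set \<Rightarrow> ('a \<Rightarrow> real) set" where
  "natext E = posi (E \<union> gpos)"

text \<open>Tuples in A_1 x ... x A_n are represented as lists of length n.\<close>

definition coherent :: "('a \<Rightarrow> real) set set \<Rightarrow> bool" where
  "coherent K \<longleftrightarrow>
     (\<forall>A\<in>K. A \<subseteq> gambles) \<and>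
     {} \<notin> K \<and>
     (\<forall>A\<in>K. A - {\<lambda>x. 0} \<in> K) \<and>
     (\<forall>g\<in>gpos. {g} \<in> K) \<and>
     (\<forall>A\<in>K. \<forall>B. A \<subseteq> B \<and> B \<subseteq> gambles \<longrightarrow> B \<in> K) \<and>
     (\<forall>A\<in>K. \<forall>F. (\<forall>g\<in>A. F g \<in> gambles \<and> (\<forall>x. F g x \<ge> g x)) \<longrightarrow> F ` A \<in> K) \<and>
     (\<forall>n::nat. \<forall>As::nat \<Rightarrow> ('a \<Rightarrow> real) set. \<forall>F::('a \<Rightarrow> real) list \<Rightarrow> ('a \<Rightarrow> real).
        (\<forall>i<n. As i \<in> K) \<and>
        (\<forall>gs. length gs = n \<and> (\<forall>i<n. gs ! i \<in> As i) \<longrightarrow> F gs \<in> posi (set gs))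
        \<longrightarrow> F ` {gs. length gs = n \<and> (\<forall>i<n. gs ! i \<in> As i)} \<in> K)"

end

theory Submission
  imports Defs
begin

lemma sum_split_nat: "(\<Sum>i<m1+m2. (F::nat\<Rightarrow>real) i) = (\<Sum>i<m1. F i) + (\<Sum>i<m2. F (m1+i))"
  by (induct m2) (simp_all add: add.assoc)

lemma posiE:
  assumes "f \<in> posi B"
  obtains m :: nat and c :: "nat \<Rightarrow> real" and h where "m \<ge> 1" "\<forall>i<m. c i > (0::real) \<and> h i \<in> B" "f = (\<lambda>x. \<Sum>i<m. c i * h i x)"
proof -
  from assms have "\<exists>m::nat. m \<ge> 1 \<and> (\<exists>c h. (\<forall>i<m. c i > (0::real) \<and> h i \<in> B) \<and> f = (\<lambda>x. \<Sum>i<m. c i * h i x))"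
    unfolding posi_def by (rule CollectD)
  then show ?thesis using that by blast
qed

lemma posi_single: "c > 0 \<Longrightarrow> h \<in> B \<Longrightarrow> (\<lambda>x. c * h x) \<in> posi B"
  unfolding posi_def
  by (rule CollectI, rule exI[of _ 1], auto intro!: exI[of _ "\<lambda>_. c"] exI[of _ "\<lambda>_. h"])

lemma posi_add: assumes "f \<in> posi B" "g \<in> posi B" shows "(\<lambda>x. f x + g x) \<in> posi B"
proof -
  obtain m1 :: nat and c1 :: "nat \<Rightarrow> real" and h1 where 1: "m1 \<ge> 1" "\<forall>i<m1. c1 i > 0 \<and> h1 i \<in> B"
    "f = (\<lambda>x. \<Sum>i<m1. c1 i * h1 i x)" by (rule posiE[OF assms(1)])
  obtain m2 :: nat and c2 :: "nat \<Rightarrow> real" and h2 where 2: "m2 \<ge> 1" "\<forall>i<m2. c2 i > 0 \<and> h2 i \<in> B"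
    "g = (\<lambda>x. \<Sum>i<m2. c2 i * h2 i x)" by (rule posiE[OF assms(2)])
  define c where "c i = (if i < m1 then c1 i else c2 (i - m1))" for i
  define h where "h i = (if i < m1 then h1 i else h2 (i - m1))" for i
  have "\<forall>i<m1+m2. c i > 0 \<and> h i \<in> B" using 1 2 by (auto simp: c_def h_def)
  moreover have "(\<lambda>x. f x + g x) = (\<lambda>x. \<Sum>i<m1+m2. c i * h i x)"
  proof
    fix x
    have "(\<Sum>i<m1+m2. c i * h i x) = (\<Sum>i<m1. c i * h i x) + (\<Sum>i<m2. c (m1+i) * h (m1+i) x)"
      by (rule sum_split_nat)
    also have "\<dots> = f x + g x" using 1 2 by (simp add: c_def h_def)
    finally show "f x + g x = (\<Sum>i<m1+m2. c i * h i x)" by simp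
  qed
  ultimately show ?thesis using 1 unfolding posi_def by (auto intro!: exI[of _ "m1+m2"])
qed

lemma split_lemma:
  fixes m :: nat and c :: "nat \<Rightarrow> real" and h :: "nat \<Rightarrow> 'a \<Rightarrow> real"
  assumes P: "\<And>q x. q \<in> P \<Longrightarrow> q x \<ge> 0"
  shows "(\<forall>i<m. c i > (0::real) \<and> h i \<in> E \<union> P) \<longrightarrow>
     (\<forall>i<m. h i \<in> P) \<or> (\<exists>p\<in>posi E. \<forall>x. p x \<le> (\<Sum>i<m. c i * h i x))"
proof (induct m)
  case 0 then show ?case by simp
next
  case (Suc m)
  show ?case
  proof
    assume H: "\<forall>i<Suc m. 0 < c i \<and> h i \<in> E \<union> P"
    have nn: "\<forall>x. (\<Sum>i<m. c i * h i x) \<ge> 0" if "\<forall>i<m. h i \<in> P"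
    proof (intro allI sum_nonneg)
      fix x i assume "i \<in> {..<m}"
      then have "c i > 0" "h i \<in> P" using that H by auto
      then show "0 \<le> c i * h i x" using P by (simp add: less_imp_le)
    qed
    from H Suc have IH: "(\<forall>i<m. h i \<in> P) \<or> (\<exists>p\<in>posi E. \<forall>x. p x \<le> (\<Sum>i<m. c i * h i x))" by auto
    have cm: "c m > 0" "h m \<in> E \<union> P" using H by auto
    show "(\<forall>i<Suc m. h i \<in> P) \<or> (\<exists>p\<in>posi E. \<forall>x. p x \<le> (\<Sum>i<Suc m. c i * h i x))"
    proof (cases "h m \<in> P")
      case True
      have hm: "\<forall>x. c m * h m x \<ge> 0" using True P cm by auto
      from IH show ?thesis
      proof
        assume "\<forall>i<m. h i \<in> P" then show ?thesis using True less_Suc_eq by auto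
      next
        assume "\<exists>p\<in>posi E. \<forall>x. p x \<le> (\<Sum>i<m. c i * h i x)"
        then obtain p where "p \<in> posi E" "\<forall>x. p x \<le> (\<Sum>i<m. c i * h i x)" by blast
        then show ?thesis using hm by (intro disjI2 bexI[of _ p]) (auto intro: add_increasing2)
      qed
    next
      case False
      then have hE: "h m \<in> E" using cm by auto
      have s1: "(\<lambda>x. c m * h m x) \<in> posi E" using posi_single cm hE by blast
      from IH show ?thesis
      proof
        assume a: "\<forall>i<m. h i \<in> P"
        show ?thesis using nn[OF a] s1 by (intro disjI2 bexI[of _ "\<lambda>x. c m * h m x"]) auto
      next
        assume "\<exists>p\<in>posi E. \<forall>x. p x \<le> (\<Sum>i<m. c i * h i x)"
        then obtain p where p: "p \<in> posi E" "\<forall>x. p x \<le> (\<Sum>i<m. c i * h i x)" by blast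
        show ?thesis using p posi_add[OF p(1) s1]
          by (intro disjI2 bexI[of _ "\<lambda>x. p x + c m * h m x"]) (auto intro: add_right_mono)
      qed
    qed
  qed
qed

lemma gpos_nonneg: "q \<in> gpos \<Longrightarrow> q x \<ge> 0"
  by (simp add: gpos_def gneq_def)

lemma posi_gpos_nonzero:
  fixes m :: nat and c :: "nat \<Rightarrow> real" and h :: "nat \<Rightarrow> 'a \<Rightarrow> real"
  assumes "m \<ge> 1" "\<forall>i<m. c i > (0::real) \<and> h i \<in> gpos"
  shows "(\<lambda>x. \<Sum>i<m. c i * h i x) \<noteq> (\<lambda>x. 0)" and "\<forall>x. (\<Sum>i<m. c i * h i x) \<ge> 0"
proof -
  show nn: "\<forall>x. (\<Sum>i<m. c i * h i x) \<ge> 0"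
    using assms by (auto intro!: sum_nonneg simp: gpos_nonneg)
  have "h 0 \<in> gpos" "c 0 > 0" using assms by auto
  then have g0: "\<forall>x. h 0 x \<ge> 0" "h 0 \<noteq> (\<lambda>x. 0)" unfolding gpos_def gneq_def by auto
  then obtain x where "h 0 x \<noteq> 0" by (meson ext)
  then have x: "h 0 x > 0" using g0(1) by (simp add: order_le_neq_trans order.not_eq_order_implies_strict)
  have "(\<Sum>i<m. c i * h i x) = c 0 * h 0 x + (\<Sum>i\<in>{..<m}-{0}. c i * h i x)"
    using assms(1) by (subst sum.remove[of _ 0]) auto
  also have "\<dots> > 0" using x \<open>c 0 > 0\<close> assms
    by (intro add_pos_nonneg) (auto intro!: sum_nonneg simp: gpos_nonneg)
  finally show "(\<lambda>x. \<Sum>i<m. c i * h i x) \<noteq> (\<lambda>x. 0)" by (metis less_irrefl)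
qed

lemma natext_cases:
  assumes "t \<in> natext E"
  shows "(\<forall>x. t x \<ge> 0) \<and> t \<noteq> (\<lambda>x. 0) \<or> (\<exists>p\<in>posi E. \<forall>x. p x \<le> t x)"
proof -
  obtain m :: nat and c :: "nat \<Rightarrow> real" and h where m: "m \<ge> 1" "\<forall>i<m. c i > (0::real) \<and> h i \<in> E \<union> gpos"
    "t = (\<lambda>x. \<Sum>i<m. c i * h i x)" by (rule posiE[OF assms[unfolded natext_def]])
  from split_lemma[of gpos m c h E] m(2) gpos_nonneg
  have "(\<forall>i<m. h i \<in> gpos) \<or> (\<exists>p\<in>posi E. \<forall>x. p x \<le> (\<Sum>i<m. c i * h i x))" by blast
  then show ?thesis
  proof
    assume "\<forall>i<m. h i \<in> gpos"
    then show ?thesis using posi_gpos_nonzero[of m c h] m by auto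
  qed (use m in auto)
qed

theorem mainTheorem2:
  fixes K :: "('a \<Rightarrow> real) set set"
    and As :: "nat \<Rightarrow> ('a \<Rightarrow> real) set"
    and B :: "('a \<Rightarrow> real) set"
    and n :: nat
  assumes "coherent K"
    and "n \<ge> 1"
    and "\<forall>i<n. As i \<in> K"
    and "B \<subseteq> gambles"
    and "\<forall>gs. length gs = n \<and> (\<forall>i<n. gs ! i \<in> As i) \<longrightarrow>
           ((\<lambda>x. 0) \<in> natext (set gs) \<or> (\<exists>f\<in>B. f \<in> natext (set gs)))"
  shows "B \<in> K"
proof -
  note coh = assms(1)[unfolded coherent_def]
  from coh have c4: "\<forall>g\<in>gpos. {g} \<in> K" by (elim conjE)
  from coh have c3: "\<forall>A\<in>K. A - {\<lambda>x. 0} \<in> K" by (elim conjE)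
  from coh have c5: "\<forall>A\<in>K. \<forall>B. A \<subseteq> B \<and> B \<subseteq> gambles \<longrightarrow> B \<in> K" by (elim conjE)
  from coh have c6: "\<forall>A\<in>K. \<forall>F. (\<forall>g\<in>A. F g \<in> gambles \<and> (\<forall>x. F g x \<ge> g x)) \<longrightarrow> F ` A \<in> K" by (elim conjE)
  from coh have c7: "\<forall>n::nat. \<forall>As::nat \<Rightarrow> ('a \<Rightarrow> real) set. \<forall>F::('a \<Rightarrow> real) list \<Rightarrow> ('a \<Rightarrow> real).
        (\<forall>i<n. As i \<in> K) \<and>
        (\<forall>gs. length gs = n \<and> (\<forall>i<n. gs ! i \<in> As i) \<longrightarrow> F gs \<in> posi (set gs))
        \<longrightarrow> F ` {gs. length gs = n \<and> (\<forall>i<n. gs ! i \<in> As i)} \<in> K" by (elim conjE)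
  have Kgpos: "\<And>g. g \<in> gpos \<Longrightarrow> {g} \<in> K" using c4 by blast
  have Ksup: "\<And>A C. A \<in> K \<Longrightarrow> A \<subseteq> C \<Longrightarrow> C \<subseteq> gambles \<Longrightarrow> C \<in> K"
    using c5 by blast
  have K0: "\<And>A. A \<in> K \<Longrightarrow> A - {\<lambda>x. 0} \<in> K" using c3 by blast
  have Kdom: "\<And>A F. A \<in> K \<Longrightarrow> (\<forall>g\<in>A. F g \<in> gambles \<and> (\<forall>x. F g x \<ge> g x)) \<Longrightarrow> F ` A \<in> K"
    using c6 by blast
  have Kadd: "\<And>F. (\<forall>gs. length gs = n \<and> (\<forall>i<n. gs ! i \<in> As i) \<longrightarrow> F gs \<in> posi (set gs))
        \<Longrightarrow> F ` {gs. length gs = n \<and> (\<forall>i<n. gs ! i \<in> As i)} \<in> K"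
  proof -
    fix F :: "('a \<Rightarrow> real) list \<Rightarrow> ('a \<Rightarrow> real)"
    assume "\<forall>gs. length gs = n \<and> (\<forall>i<n. gs ! i \<in> As i) \<longrightarrow> F gs \<in> posi (set gs)"
    then show "F ` {gs. length gs = n \<and> (\<forall>i<n. gs ! i \<in> As i)} \<in> K"
      using c7[rule_format, of n As F] assms(3) by blast
  qed
  define T where "T = {gs. length gs = n \<and> (\<forall>i<n. gs ! i \<in> As i)}"
  show ?thesis
  proof (cases "B \<inter> gpos = {}")
    case False
    then obtain f where f: "f \<in> B" "f \<in> gpos" by blast
    then have "{f} \<in> K" using Kgpos by blast
    then show ?thesis using Ksup f assms(4) by blast
  next
    case True
    have zg: "(\<lambda>x. 0::real) \<in> gambles" by (simp add: gambles_def)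
    have key: "\<exists>p t. p \<in> posi (set gs) \<and> t \<in> insert (\<lambda>x. 0) B \<and> (\<forall>x. p x \<le> t x)"
      if "gs \<in> T" for gs
    proof -
      from that assms(5) obtain t where t: "t \<in> insert (\<lambda>x. 0) B" "t \<in> natext (set gs)"
        unfolding T_def by blast
      have "\<not> ((\<forall>x. t x \<ge> 0) \<and> t \<noteq> (\<lambda>x. 0))"
      proof
        assume a: "(\<forall>x. t x \<ge> 0) \<and> t \<noteq> (\<lambda>x. 0)"
        then have "t \<in> B" using t by auto
        then have "t \<in> gpos" using a assms(4) by (auto simp: gpos_def gneq_def)
        then show False using True \<open>t \<in> B\<close> by blast
      qed
      then show ?thesis using natext_cases[OF t(2)] t(1) by blast
    qed
    define F where "F gs = (SOME p. \<exists>t. p \<in> posi (set gs) \<and> t \<in> insert (\<lambda>x. 0) B \<and> (\<forall>x. p x \<le> t x))" for gs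
    define Tg where "Tg gs = (SOME t. F gs \<in> posi (set gs) \<and> t \<in> insert (\<lambda>x. 0) B \<and> (\<forall>x. F gs x \<le> t x))" for gs
    have FT: "F gs \<in> posi (set gs) \<and> Tg gs \<in> insert (\<lambda>x. 0) B \<and> (\<forall>x. F gs x \<le> Tg gs x)"
      if "gs \<in> T" for gs
    proof -
      from someI_ex[OF key[OF that]] have "\<exists>t. F gs \<in> posi (set gs) \<and> t \<in> insert (\<lambda>x. 0) B \<and> (\<forall>x. F gs x \<le> t x)"
        unfolding F_def .
      from someI_ex[OF this] show ?thesis unfolding Tg_def .
    qed
    have A1: "F ` T \<in> K"
      unfolding T_def by (rule Kadd) (use FT T_def in blast)
    define G where "G a = Tg (SOME gs. gs \<in> T \<and> F gs = a)" for a
    have G: "G a \<in> gambles \<and> (\<forall>x. G a x \<ge> a x) \<and> G a \<in> insert (\<lambda>x. 0) B" if "a \<in> F ` T" for a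
    proof -
      have "\<exists>gs. gs \<in> T \<and> F gs = a" using that by blast
      from someI_ex[OF this] have s: "(SOME gs. gs \<in> T \<and> F gs = a) \<in> T"
        "F (SOME gs. gs \<in> T \<and> F gs = a) = a" by auto
      from FT[OF s(1)] s(2) show ?thesis using zg assms(4) unfolding G_def by auto
    qed
    have A2: "G ` F ` T \<in> K" by (rule Kdom[OF A1]) (use G in blast)
    then have A3: "G ` F ` T - {\<lambda>x. 0} \<in> K" by (rule K0)
    have "G ` F ` T - {\<lambda>x. 0} \<subseteq> B" using G by fastforce
    then show ?thesis by (rule Ksup[OF A3 _ assms(4)])
  qed
qed

end
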